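(* Let $\widehat{\mathbb P}$ be a nominal distribution as described in the context (determined by a probability vector $\widehat p\in\mathbb R_+^C$ and parameters $\widehat\theta_1,\dots,\widehat\theta_C\in\Theta$). For $\varepsilon\in\mathbb R_+$ and $\rho\in\mathbb R_+^C$ let $\mathbb B_{\varepsilon,\rho}(\widehat{\mathbb P})$ be the set of all probability measures $\mathbb Q$ on $\mathcal X\times\mathcal Y$ for which there exist $\mathbb Q_X\in\mathcal M(\mathcal X)$ and $\theta_1,\dots,\theta_C\in\Theta$ such that, writing $\mathbb Q_{Y|\widehat x_c}$ for the distribution with density $f(\cdot|\theta_c)$: (i) $\mathbb Q(\{\widehat x_c\}\times A)=\mathbb Q_X(\{\widehat x_c\})\,\mathbb Q_{Y|\widehat x_c}(A)$ for all $c$ and all measurable $A\subseteq\mathcal Y$; (ii) $\mathrm{KL}(\mathbb Q_{Y|\widehat x_c}\,\|\,\widehat{\mathbb P}_{Y|\widehat x_c})\le\rho_c$ for all $c$; (iii) $\mathrm{KL}(\mathbb Q_X\,\|\,\widehat{\mathbb P}_X)+\sum_{c=1}^C\rho_c\,\mathbb Q_X(\{\widehat x_c\})\le\varepsilon$. Let $\mathcal B_\varepsilon(\widehat{\mathbb P})$ be the set of all probability measures $\mathbb Q$ on $\mathcal X\times\mathcal Y$ for which there exist $\mathbb Q_X\in\mathcal M(\mathcal X)$ and $\theta_1,\dots,\theta_C\in\Theta$ satisfying (i) and $\mathrm{KL}(\mathbb Q\,\|\,\widehat{\mathbb P})\le\varepsilon$. Then for every $\varepsilon\in\mathbb R_+$,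 \[\mathcal B_\varepsilon(\widehat{\mathbb P})=\bigcup_{\rho\in\mathbb R_+^C}\mathbb B_{\varepsilon,\rho}(\widehat{\mathbb P}).\]
   Context: Exponential family: $\nu$ is a measure on $\mathcal Y\subseteq\mathbb R^m$, $h\ge 0$ and $T:\mathcal Y\to\mathbb R^p$ measurable; $f(y|\theta)=h(y)\exp(\langle\theta,T(y)\rangle-\Psi(\theta))$ is a density w.r.t. $\nu$, where $\Theta=\{\theta\in\mathbb R^p:\int h(y)e^{\langle\theta,T(y)\rangle}d\nu(y)<\infty\}$ and $\Psi(\theta)=\log\int h(y)e^{\langle\theta,T(y)\rangle}d\nu(y)$ (log-partition function). The family is regular: $\Theta$ is open and $T_1,\dots,T_p$ are affinely independent. $\mathcal X\subseteq\mathbb R^n$; $\widehat x_1,\dots,\widehat x_C\in\mathcal X$ are distinct points. A nominal distribution $\widehat{\mathbb P}$ is the probability measure on $\mathcal X\times\mathcal Y$ with marginal $\widehat{\mathbb P}_X=\sum_{c}\widehat p_c\delta_{\widehat x_c}$ and conditional distributions $\widehat{\mathbb P}_{Y|\widehat x_c}$ having density $f(\cdot|\widehat\theta_c)$, i.e. $\widehat{\mathbb P}(\{\widehat x_c\}\times A)=\widehat p_c\,\widehat{\mathbb P}_{Y|\widehat x_c}(A)$, where $\widehat p\in\mathbb R_+^C$ sums to 1 and $\widehat\theta_c\in\Theta$. $\mathcal M(S)$ denotes the probability measures on $S$. $\mathrm{KL}(\mathbb P_1\|\mathbb P_2)=\mathbb E_{\mathbb P_1}[\log(d\mathbb P_1/d\mathbb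 P_2)]$ if $\mathbb P_1\ll\mathbb P_2$ and $+\infty$ otherwise. *)

theory Defs
  imports "HOL-Probability.Probability"
begin

definition KL :: "'a measure \<Rightarrow> 'a measure \<Rightarrow> ereal" where
  "KL P1 P2 =
    (if sets P1 = sets P2 \<and> absolutely_continuous P2 P1 then
       (let r = (\<lambda>x. enn2real (RN_deriv P2 P1 x)) in
          enn2ereal (\<integral>\<^sup>+ x. ennreal (ln (r x)) \<partial>P1)
        - enn2ereal (\<integral>\<^sup>+ x. ennreal (- ln (r x)) \<partial>P1))
     else \<infinity>)"

definition Theta :: "'y measure \<Rightarrow> ('y \<Rightarrow> real) \<Rightarrow> ('y \<Rightarrow> 'p::euclidean_space) \<Rightarrow> 'p set" where
  "Theta nu h T = {\<theta>. (\<integral>\<^sup>+ y. ennreal (h y * exp (\<theta> \<bullet> T y)) \<partial>nu) < \<infinity>}"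

definition Psi :: "'y measure \<Rightarrow> ('y \<Rightarrow> real) \<Rightarrow> ('y \<Rightarrow> 'p::euclidean_space) \<Rightarrow> 'p \<Rightarrow> real" where
  "Psi nu h T \<theta> = ln (enn2real (\<integral>\<^sup>+ y. ennreal (h y * exp (\<theta> \<bullet> T y)) \<partial>nu))"

definition expfam_dens ::
  "'y measure \<Rightarrow> ('y \<Rightarrow> real) \<Rightarrow> ('y \<Rightarrow> 'p::euclidean_space) \<Rightarrow> 'p \<Rightarrow> 'y \<Rightarrow> real" where
  "expfam_dens nu h T \<theta> y = h y * exp (\<theta> \<bullet> T y - Psi nu h T \<theta>)"

definition expfam_dist ::
  "'y measure \<Rightarrow> ('y \<Rightarrow> real) \<Rightarrow> ('y \<Rightarrow> 'p::euclidean_space) \<Rightarrow> 'p \<Rightarrow> 'y measure" where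
  "expfam_dist nu h T \<theta> = density nu (\<lambda>y. ennreal (expfam_dens nu h T \<theta> y))"

definition affinely_indep_stat ::
  "'y measure \<Rightarrow> ('y \<Rightarrow> real) \<Rightarrow> ('y \<Rightarrow> 'p::euclidean_space) \<Rightarrow> bool" where
  "affinely_indep_stat nu h T \<longleftrightarrow>
     (\<forall>a b. a \<noteq> 0 \<longrightarrow> \<not> (AE y in density nu (\<lambda>y. ennreal (h y)). a \<bullet> T y = b))"

definition regular_expfam ::
  "'y measure \<Rightarrow> ('y \<Rightarrow> real) \<Rightarrow> ('y \<Rightarrow> 'p::euclidean_space) \<Rightarrow> bool" where
  "regular_expfam nu h T \<longleftrightarrow>
     h \<in> borel_measurable nu \<and> (\<forall>y\<in>space nu. 0 \<le> h y) \<and> T \<in> borel_measurable nu \<and>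
     open (Theta nu h T) \<and> affinely_indep_stat nu h T"

definition cond_decomp ::
  "'x measure \<Rightarrow> 'y measure \<Rightarrow> ('y \<Rightarrow> real) \<Rightarrow> ('y \<Rightarrow> 'p::euclidean_space) \<Rightarrow> nat \<Rightarrow> (nat \<Rightarrow> 'x)
    \<Rightarrow> ('x \<times> 'y) measure \<Rightarrow> 'x measure \<Rightarrow> (nat \<Rightarrow> 'p) \<Rightarrow> bool" where
  "cond_decomp MX nu h T C xh Q QX \<theta> \<longleftrightarrow>
     (\<forall>c<C. \<forall>A\<in>sets nu.
        emeasure Q ({xh c} \<times> A) = emeasure QX {xh c} * emeasure (expfam_dist nu h T (\<theta> c)) A)"

definition Bball ::
  "'x measure \<Rightarrow> 'y measure \<Rightarrow> ('y \<Rightarrow> real) \<Rightarrow> ('y \<Rightarrow> 'p::euclidean_space) \<Rightarrow> nat \<Rightarrow> (nat \<Rightarrow> 'x)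
    \<Rightarrow> ('x \<times> 'y) measure \<Rightarrow> (nat \<Rightarrow> 'p) \<Rightarrow> real \<Rightarrow> (nat \<Rightarrow> real) \<Rightarrow> ('x \<times> 'y) measure set" where
  "Bball MX nu h T C xh Ph \<theta>h \<epsilon> \<rho> =
     {Q. prob_space Q \<and> sets Q = sets (MX \<Otimes>\<^sub>M nu) \<and>
        (\<exists>QX \<theta>. prob_space QX \<and> sets QX = sets MX \<and> (\<forall>c<C. \<theta> c \<in> Theta nu h T) \<and>
           cond_decomp MX nu h T C xh Q QX \<theta> \<and>
           (\<forall>c<C. KL (expfam_dist nu h T (\<theta> c)) (expfam_dist nu h T (\<theta>h c)) \<le> ereal (\<rho> c)) \<and>
           KL QX (distr Ph MX fst) + ereal (\<Sum>c<C. \<rho> c * measure QX {xh c}) \<le> ereal \<epsilon>)}"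

definition KLball ::
  "'x measure \<Rightarrow> 'y measure \<Rightarrow> ('y \<Rightarrow> real) \<Rightarrow> ('y \<Rightarrow> 'p::euclidean_space) \<Rightarrow> nat \<Rightarrow> (nat \<Rightarrow> 'x)
    \<Rightarrow> ('x \<times> 'y) measure \<Rightarrow> real \<Rightarrow> ('x \<times> 'y) measure set" where
  "KLball MX nu h T C xh Ph \<epsilon> =
     {Q. prob_space Q \<and> sets Q = sets (MX \<Otimes>\<^sub>M nu) \<and>
        (\<exists>QX \<theta>. prob_space QX \<and> sets QX = sets MX \<and> (\<forall>c<C. \<theta> c \<in> Theta nu h T) \<and>
           cond_decomp MX nu h T C xh Q QX \<theta> \<and> KL Q Ph \<le> ereal \<epsilon>)}"

end

theory Submission
  imports Defs
begin

lemma KL_density_eq: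
  assumes P1: "prob_space P1" and P2: "prob_space P2" and sets: "sets P1 = sets P2"
    and r: "r \<in> borel_measurable P2" and eq: "P1 = density P2 r"
  shows "KL P1 P2 = enn2ereal (\<integral>\<^sup>+x. ennreal (ln (enn2real (r x))) \<partial>P1)
                  - enn2ereal (\<integral>\<^sup>+x. ennreal (- ln (enn2real (r x))) \<partial>P1)"
proof -
  interpret P2: prob_space P2 by fact
  have ac: "absolutely_continuous P2 P1" using eq absolutely_continuousI_density r by blast
  have "AE x in P2. r x = RN_deriv P2 P1 x" using P2.RN_deriv_unique[OF r eq[symmetric]] .
  then have ae: "AE x in P1. r x = RN_deriv P2 P1 x" using absolutely_continuous_AE[OF sets ac] by blast
  have 1: "(\<integral>\<^sup>+x. ennreal (ln (enn2real (RN_deriv P2 P1 x))) \<partial>P1) = (\<integral>\<^sup>+x. ennreal (ln (enn2real (r x))) \<partial>P1)"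
    by (rule nn_integral_cong_AE) (use ae in auto)
  have 2: "(\<integral>\<^sup>+x. ennreal (- ln (enn2real (RN_deriv P2 P1 x))) \<partial>P1) = (\<integral>\<^sup>+x. ennreal (- ln (enn2real (r x))) \<partial>P1)"
    by (rule nn_integral_cong_AE) (use ae in auto)
  show ?thesis unfolding KL_def using sets ac 1 2 by (simp add: Let_def)
qed

lemma enn2ereal_fin: "x \<noteq> top \<Longrightarrow> enn2ereal x = ereal (enn2real x)"
  by (cases x) auto

lemma xlnx_le1: "(r::ennreal) * ennreal (- ln (enn2real r)) \<le> 1"
proof (cases r)
  case (real t)
  show ?thesis
  proof (cases "t = 0 \<or> 1 \<le> t")
    case True
    then have "ennreal (- ln t) = 0 \<or> t = 0" using ln_ge_zero by (auto simp: ennreal_eq_0_iff)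
    then show ?thesis using real by auto
  next
    case False
    then have t: "0 < t" "t < 1" using real by auto
    have "ln (1/t) \<le> 1/t - 1" using t by (intro ln_le_minus_one) auto
    then have "- ln t \<le> 1/t - 1" using t by (simp add: ln_div)
    then have "t * (- ln t) \<le> t * (1/t - 1)" using t by (intro mult_left_mono) auto
    also have "\<dots> \<le> 1" using t by (simp add: field_simps)
    finally have "t * (- ln t) \<le> 1" .
    then show ?thesis using real t by (simp add: ennreal_mult[symmetric] ennreal_le_1)
  qed
next
  case top
  then show ?thesis by simp
qed

lemma KL_neg_finite:
  assumes P2: "prob_space P2" and r: "r \<in> borel_measurable P2" and eq: "P1 = density P2 r"
  shows "(\<integral>\<^sup>+x. ennreal (- ln (enn2real (r x))) \<partial>P1) < \<infinity>"
proof -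
  interpret P2: prob_space P2 by fact
  have "(\<integral>\<^sup>+x. ennreal (- ln (enn2real (r x))) \<partial>P1) = (\<integral>\<^sup>+x. r x * ennreal (- ln (enn2real (r x))) \<partial>P2)"
    using r unfolding eq by (subst nn_integral_density) auto
  also have "\<dots> \<le> (\<integral>\<^sup>+x. 1 \<partial>P2)" by (intro nn_integral_mono xlnx_le1)
  also have "\<dots> = 1" by (simp add: P2.emeasure_space_1)
  finally show ?thesis by (simp add: le_less_trans)
qed

lemma KL_nonneg_aux:
  assumes P1: "prob_space P1" and P2: "prob_space P2" and r: "r \<in> borel_measurable P2" and eq: "P1 = density P2 r"
  shows "0 \<le> enn2ereal (\<integral>\<^sup>+x. ennreal (ln (enn2real (r x))) \<partial>P1)
                  - enn2ereal (\<integral>\<^sup>+x. ennreal (- ln (enn2real (r x))) \<partial>P1)"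
proof -
  interpret P2: prob_space P2 by fact
  interpret P1: prob_space P1 by fact
  have neg: "(\<integral>\<^sup>+x. ennreal (- ln (enn2real (r x))) \<partial>P1) < \<infinity>" using KL_neg_finite[OF P2 r eq] .
  define d where "d x = enn2real (r x)" for x
  have dm[measurable]: "d \<in> borel_measurable P2" unfolding d_def using r by measurable
  have "(\<integral>\<^sup>+x. r x \<partial>P2) = emeasure P1 (space P1)"
    using r unfolding eq by (simp add: emeasure_density)
  then have "(\<integral>\<^sup>+x. r x \<partial>P2) = 1" by (simp add: P1.emeasure_space_1)
  then have "AE x in P2. r x \<noteq> \<infinity>" using r by (intro nn_integral_PInf_AE) auto
  then have "AE x in P2. r x = ennreal (d x)" unfolding d_def by eventually_elim (simp add: less_top)
  then have eq2: "P1 = density P2 (\<lambda>x. ennreal (d x))" unfolding eq using r by (intro density_cong) auto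
  have d0[simp]: "AE x in P2. 0 \<le> d x" unfolding d_def by simp
  show ?thesis
  proof (cases "(\<integral>\<^sup>+x. ennreal (ln (enn2real (r x))) \<partial>P1) = \<infinity>")
    case True
    then show ?thesis using neg by simp
  next
    case False
    have "(\<lambda>x. ln (d x)) \<in> borel_measurable P2" by measurable
    then have "(\<lambda>x. ln (d x)) \<in> borel_measurable P1" by (simp add: eq2)
    then have intf: "integrable P1 (\<lambda>x. ln (d x))"
      unfolding real_integrable_def using False neg
      by (auto simp: d_def eq2)
    have "integrable P2 (\<lambda>x. d x *\<^sub>R ln (d x))"
      using intf unfolding eq2 by (subst (asm) integrable_density) auto
    then have int1: "integrable P2 (\<lambda>x. d x * ln (d x))" by simp
    have "integrable P2 (\<lambda>x. d x *\<^sub>R (1::real))"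
      using P1.integrable_const[of "1::real"] unfolding eq2 by (subst (asm) integrable_density) auto
    moreover have "(\<lambda>x. d x *\<^sub>R (1::real)) = d" by (rule ext) simp
    ultimately have intd: "integrable P2 d" by simp
    have "(\<integral>x. 1 \<partial>P1) = (\<integral>x. d x *\<^sub>R (1::real) \<partial>P2)" unfolding eq2 by (subst integral_density) auto
    then have intd1: "(\<integral>x. d x \<partial>P2) = 1" using P1.prob_space by simp
    have "(\<integral>x. ln (d x) \<partial>P1) = (\<integral>x. d x *\<^sub>R ln (d x) \<partial>P2)" unfolding eq2 by (subst integral_density) auto
    also have "\<dots> \<ge> (\<integral>x. d x - 1 \<partial>P2)"
    proof (intro integral_mono)
      show "integrable P2 (\<lambda>x. d x - 1)" using intd by auto
      show "integrable P2 (\<lambda>x. d x *\<^sub>R ln (d x))" using int1 by simp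
      fix x assume "x \<in> space P2"
      have "0 \<le> d x" unfolding d_def by simp
      show "d x - 1 \<le> d x *\<^sub>R ln (d x)"
      proof (cases "d x = 0")
        case True then show ?thesis by simp
      next
        case False
        with \<open>0 \<le> d x\<close> have t: "0 < d x" by simp
        have "ln (1 / d x) \<le> 1 / d x - 1" using t by (intro ln_le_minus_one) auto
        then have "- ln (d x) \<le> 1 / d x - 1" using t by (simp add: ln_div)
        then have "d x * (- ln (d x)) \<le> d x * (1 / d x - 1)" using t by (intro mult_left_mono) auto
        moreover have "d x * (1 / d x - 1) = 1 - d x" using t by (simp add: field_simps)
        ultimately show ?thesis by simp
      qed
    qed
    finally have ge: "0 \<le> (\<integral>x. ln (d x) \<partial>P1)" using intd1 intd by (simp add: Bochner_Integration.integral_diff P2.prob_space)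
    have "(\<integral>x. ln (d x) \<partial>P1) = enn2real (\<integral>\<^sup>+x. ennreal (ln (d x)) \<partial>P1) - enn2real (\<integral>\<^sup>+x. ennreal (- ln (d x)) \<partial>P1)"
      using intf by (rule real_lebesgue_integral_def)
    then show ?thesis using ge False neg unfolding d_def
      by (simp add: enn2ereal_fin less_top)
  qed
qed

lemma ennreal_le_add_aux: "u \<le> v + w \<Longrightarrow> 0 \<le> w \<Longrightarrow> ennreal u \<le> ennreal v + ennreal w"
proof (cases "0 \<le> v")
  case True
  assume "u \<le> v + w" "0 \<le> w"
  then have "ennreal u \<le> ennreal (v + w)" by (intro ennreal_leI)
  then show ?thesis using True \<open>0 \<le> w\<close> by (simp add: ennreal_plus)
next
  case False
  assume "u \<le> v + w" "0 \<le> w"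
  then have "ennreal u \<le> ennreal w" using False by (intro ennreal_leI) auto
  then show ?thesis using False by (simp add: ennreal_neg)
qed

lemma KL_shift:
  fixes l :: "'a \<Rightarrow> real"
  assumes M: "prob_space M" and l[measurable]: "l \<in> borel_measurable M"
    and negfin: "(\<integral>\<^sup>+x. ennreal (- l x) \<partial>M) < \<infinity>"
  shows "enn2ereal (\<integral>\<^sup>+x. ennreal (a + l x) \<partial>M) - enn2ereal (\<integral>\<^sup>+x. ennreal (- (a + l x)) \<partial>M)
       = ereal a + (enn2ereal (\<integral>\<^sup>+x. ennreal (l x) \<partial>M) - enn2ereal (\<integral>\<^sup>+x. ennreal (- l x) \<partial>M))"
proof -
  interpret M: prob_space M by fact
  have "(\<integral>\<^sup>+x. ennreal (- (a + l x)) \<partial>M) \<le> (\<integral>\<^sup>+x. ennreal (- l x) + ennreal \<bar>a\<bar> \<partial>M)"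
    by (intro nn_integral_mono ennreal_le_add_aux) auto
  also have "\<dots> = (\<integral>\<^sup>+x. ennreal (- l x) \<partial>M) + ennreal \<bar>a\<bar>"
    by (subst nn_integral_add) (auto simp: M.emeasure_space_1)
  also have "\<dots> < \<infinity>" using negfin by (simp add: less_top)
  finally have negfin': "(\<integral>\<^sup>+x. ennreal (- (a + l x)) \<partial>M) < \<infinity>" .
  show ?thesis
  proof (cases "(\<integral>\<^sup>+x. ennreal (l x) \<partial>M) = \<infinity>")
    case True
    have "(\<integral>\<^sup>+x. ennreal (l x) \<partial>M) \<le> (\<integral>\<^sup>+x. ennreal (a + l x) + ennreal \<bar>a\<bar> \<partial>M)"
      by (intro nn_integral_mono ennreal_le_add_aux) auto
    also have "\<dots> = (\<integral>\<^sup>+x. ennreal (a + l x) \<partial>M) + ennreal \<bar>a\<bar>"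
      by (subst nn_integral_add) (auto simp: M.emeasure_space_1)
    finally have "(\<integral>\<^sup>+x. ennreal (a + l x) \<partial>M) = \<infinity>" using True by (auto simp: top_unique)
    then show ?thesis using True negfin negfin' by (simp add: less_top)
  next
    case False
    have il: "integrable M l" unfolding real_integrable_def using False negfin by auto
    then have ial: "integrable M (\<lambda>x. a + l x)" by auto
    have "(\<integral>x. a + l x \<partial>M) = a + (\<integral>x. l x \<partial>M)" using il by (simp add: M.prob_space)
    moreover have "(\<integral>x. a + l x \<partial>M) = enn2real (\<integral>\<^sup>+x. ennreal (a + l x) \<partial>M) - enn2real (\<integral>\<^sup>+x. ennreal (- (a + l x)) \<partial>M)"
      using ial by (rule real_lebesgue_integral_def)
    moreover have "(\<integral>x. l x \<partial>M) = enn2real (\<integral>\<^sup>+x. ennreal (l x) \<partial>M) - enn2real (\<integral>\<^sup>+x. ennreal (- l x) \<partial>M)"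
      using il by (rule real_lebesgue_integral_def)
    moreover have "(\<integral>\<^sup>+x. ennreal (a + l x) \<partial>M) \<noteq> \<infinity>" using ial unfolding real_integrable_def by auto
    ultimately show ?thesis using False negfin negfin' by (simp add: enn2ereal_fin less_top)
  qed
qed

lemma slice_integral:
  fixes M :: "('x \<times> 'y) measure"
  assumes sM: "sets M = sets (MX \<Otimes>\<^sub>M nu)" and xc: "xc \<in> space MX" and xcs: "{xc} \<in> sets MX"
    and sMc: "sets Mc = sets nu"
    and eqA: "\<forall>A\<in>sets nu. emeasure M ({xc} \<times> A) = m * emeasure Mc A"
    and F: "F \<in> borel_measurable (MX \<Otimes>\<^sub>M nu)"
  shows "(\<integral>\<^sup>+z. F z * indicator ({xc} \<times> space nu) z \<partial>M) = m * (\<integral>\<^sup>+y. F (xc, y) \<partial>Mc)"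
proof -
  let ?S = "{xc} \<times> space nu"
  have spM: "space M = space MX \<times> space nu" using sets_eq_imp_space_eq[OF sM] by (simp add: space_pair_measure)
  note measM = measurable_cong_sets[OF sM refl]
  have Fx: "(\<lambda>y. F (xc, y)) \<in> borel_measurable nu" using F xc by measurable
  have S: "?S \<in> sets M" unfolding sM using xcs by (intro pair_measureI) auto
  have Fs: "(\<lambda>z. F (xc, snd z)) \<in> borel_measurable M" unfolding measM using Fx by measurable
  have Fx': "(\<lambda>y. F (xc, y)) \<in> borel_measurable Mc" unfolding measurable_cong_sets[OF sMc refl] by (rule Fx)
  define N where "N = density M (indicator ?S)"
  have sN: "sets N = sets M" unfolding N_def by simp
  have spN: "space N = space M" unfolding N_def by simp
  have sndm: "snd \<in> measurable N nu"
    unfolding measurable_cong_sets[OF sN refl] measM by simp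
  have "(\<integral>\<^sup>+z. F z * indicator ?S z \<partial>M) = (\<integral>\<^sup>+z. indicator ?S z * F (xc, snd z) \<partial>M)"
    by (intro nn_integral_cong) (auto simp: indicator_def)
  also have "\<dots> = (\<integral>\<^sup>+z. F (xc, snd z) \<partial>N)"
    unfolding N_def using S Fs
    by (subst nn_integral_density) auto
  also have "\<dots> = (\<integral>\<^sup>+y. F (xc, y) \<partial>distr N nu snd)"
    using sndm Fx by (subst nn_integral_distr) auto
  also have "distr N nu snd = density Mc (\<lambda>_. m)"
  proof (rule measure_eqI)
    show "sets (distr N nu snd) = sets (density Mc (\<lambda>_. m))" using sMc by simp
  next
    fix A assume "A \<in> sets (distr N nu snd)"
    then have A: "A \<in> sets nu" by simp
    have Asub: "A \<subseteq> space nu" using sets.sets_into_space[OF A] .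
    have pre: "snd -` A \<inter> space N \<in> sets M" using sndm A sN by (metis measurable_sets)
    have "emeasure (distr N nu snd) A = emeasure N (snd -` A \<inter> space N)"
      using sndm A by (simp add: emeasure_distr)
    also have "\<dots> = (\<integral>\<^sup>+z. indicator ?S z * indicator (snd -` A \<inter> space N) z \<partial>M)"
      unfolding N_def using S pre spN by (subst emeasure_density) auto
    also have "\<dots> = (\<integral>\<^sup>+z. indicator ({xc} \<times> A) z \<partial>M)"
      using Asub xc by (intro nn_integral_cong) (auto simp: indicator_def spN spM)
    also have "\<dots> = emeasure M ({xc} \<times> A)"
      using A xcs sM by (intro nn_integral_indicator) auto
    also have "\<dots> = m * emeasure Mc A" using eqA A by auto
    also have "\<dots> = emeasure (density Mc (\<lambda>_. m)) A"
      using A sMc by (simp add: emeasure_density nn_integral_cmult_indicator)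
    finally show "emeasure (distr N nu snd) A = emeasure (density Mc (\<lambda>_. m)) A" .
  qed
  also have "(\<integral>\<^sup>+y. F (xc, y) \<partial>density Mc (\<lambda>_. m)) = (\<integral>\<^sup>+y. m * F (xc, y) \<partial>Mc)"
    using Fx' by (subst nn_integral_density) auto
  also have "\<dots> = m * (\<integral>\<^sup>+y. F (xc, y) \<partial>Mc)"
    using Fx' by (rule nn_integral_cmult)
  finally show ?thesis .
qed

lemma atomX_integral:
  fixes C :: nat
  assumes sM: "sets M = sets MX" and xs: "\<forall>c<C. {xh c} \<in> sets MX" and inj: "inj_on xh {..<C}"
    and conc: "emeasure M (space M - xh ` {..<C}) = 0"
  shows "(\<integral>\<^sup>+x. G x \<partial>M) = (\<Sum>c<C. emeasure M {xh c} * G (xh c))"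
proof -
  have "xh ` {..<C} = (\<Union>c\<in>{..<C}. {xh c})" by auto
  also have "\<dots> \<in> sets M" using xs sM by (intro sets.finite_UN) auto
  finally have U: "xh ` {..<C} \<in> sets M" .
  have sub: "space M - xh ` {..<C} \<in> sets M" using U by auto
  have "AE x in M. x \<notin> space M - xh ` {..<C}" using conc sub by (intro AE_not_in) (simp add: null_sets_def)
  then have ae: "AE x in M. x \<in> xh ` {..<C}" by (auto elim: AE_mp intro!: AE_I2)
  have "(\<integral>\<^sup>+x. G x \<partial>M) = (\<integral>\<^sup>+x. (\<Sum>c<C. G (xh c) * indicator {xh c} x) \<partial>M)"
  proof (rule nn_integral_cong_AE)
    show "AE x in M. G x = (\<Sum>c<C. G (xh c) * indicator {xh c} x)"
      using ae
    proof eventually_elim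
      case (elim x)
      then obtain c where c: "c < C" "x = xh c" by auto
      have "(\<Sum>c'<C. G (xh c') * indicator {xh c'} x) = (\<Sum>c'\<in>{c}. G (xh c') * indicator {xh c'} x)"
        using c inj by (intro sum.mono_neutral_right) (auto simp: inj_on_def indicator_def)
      then show ?case using c by simp
    qed
  qed
  also have "\<dots> = (\<Sum>c<C. \<integral>\<^sup>+x. G (xh c) * indicator {xh c} x \<partial>M)"
    using xs sM by (intro nn_integral_sum) auto
  also have "\<dots> = (\<Sum>c<C. emeasure M {xh c} * G (xh c))"
    using xs sM by (intro sum.cong refl) (simp add: nn_integral_cmult_indicator mult.commute)
  finally show ?thesis .
qed

lemma atom_integral:
  fixes M :: "('x \<times> 'y) measure" and C :: nat
  assumes sM: "sets M = sets (MX \<Otimes>\<^sub>M nu)" and xc: "\<forall>c<C. xh c \<in> space MX" and xcs: "\<forall>c<C. {xh c} \<in> sets MX"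
    and inj: "inj_on xh {..<C}"
    and sMc: "\<forall>c<C. sets (Mc c) = sets nu"
    and eqA: "\<forall>c<C. \<forall>A\<in>sets nu. emeasure M ({xh c} \<times> A) = m c * emeasure (Mc c) A"
    and conc: "emeasure M (space M - (\<Union>c<C. {xh c} \<times> space nu)) = 0"
    and F: "F \<in> borel_measurable (MX \<Otimes>\<^sub>M nu)"
  shows "(\<integral>\<^sup>+z. F z \<partial>M) = (\<Sum>c<C. m c * (\<integral>\<^sup>+y. F (xh c, y) \<partial>Mc c))"
proof -
  note measM = measurable_cong_sets[OF sM refl]
  have Fm: "F \<in> borel_measurable M" unfolding measM by (rule F)
  have Sc: "{xh c} \<times> space nu \<in> sets M" if "c < C" for c
    unfolding sM using xcs that by (intro pair_measureI) auto
  have U: "(\<Union>c<C. {xh c} \<times> space nu) \<in> sets M" by (rule sets.finite_UN) (auto simp: Sc)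
  have sub: "space M - (\<Union>c<C. {xh c} \<times> space nu) \<in> sets M" using U by auto
  have "AE x in M. x \<notin> space M - (\<Union>c<C. {xh c} \<times> space nu)" using conc sub by (intro AE_not_in) (simp add: null_sets_def)
  then have ae: "AE z in M. z \<in> (\<Union>c<C. {xh c} \<times> space nu)" by (auto elim: AE_mp intro!: AE_I2)
  have "(\<integral>\<^sup>+z. F z \<partial>M) = (\<integral>\<^sup>+z. (\<Sum>c<C. F z * indicator ({xh c} \<times> space nu) z) \<partial>M)"
  proof (rule nn_integral_cong_AE)
    show "AE z in M. F z = (\<Sum>c<C. F z * indicator ({xh c} \<times> space nu) z)"
      using ae
    proof eventually_elim
      case (elim z)
      then obtain c where c: "c < C" "z \<in> {xh c} \<times> space nu" by auto
      have "(\<Sum>c'<C. F z * indicator ({xh c'} \<times> space nu) z) = (\<Sum>c'\<in>{c}. F z * indicator ({xh c'} \<times> space nu) z)"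
        using c inj by (intro sum.mono_neutral_right) (auto simp: inj_on_def indicator_def)
      then show ?case using c by simp
    qed
  qed
  also have "\<dots> = (\<Sum>c<C. \<integral>\<^sup>+z. F z * indicator ({xh c} \<times> space nu) z \<partial>M)"
    using Sc Fm by (intro nn_integral_sum) auto
  also have "\<dots> = (\<Sum>c<C. m c * (\<integral>\<^sup>+y. F (xh c, y) \<partial>Mc c))"
  proof (intro sum.cong refl)
    fix c assume "c \<in> {..<C}"
    then show "(\<integral>\<^sup>+z. F z * indicator ({xh c} \<times> space nu) z \<partial>M) = m c * (\<integral>\<^sup>+y. F (xh c, y) \<partial>Mc c)"
      using xc xcs sMc eqA F by (intro slice_integral[OF sM]) auto
  qed
  finally show ?thesis .
qed

lemma posneg_one:
  fixes w :: real and x y :: ennreal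
  assumes w: "0 \<le> w" and y: "y \<noteq> \<infinity>"
  shows "enn2ereal (ennreal w * x) - enn2ereal (ennreal w * y) = ereal w * (enn2ereal x - enn2ereal y)"
proof -
  obtain b where b: "y = ennreal b" "0 \<le> b" using y by (cases y) auto
  have yb: "ennreal w * y = ennreal (w * b)" using b w by (simp add: ennreal_mult)
  have ey: "enn2ereal (ennreal w * y) = ereal (w * b)" using yb b w by simp
  show ?thesis
  proof (cases x)
    case (real a)
    have "ennreal w * x = ennreal (w * a)" using real w by (simp add: ennreal_mult)
    then have "enn2ereal (ennreal w * x) = ereal (w * a)" using real w by simp
    moreover have "ereal (w * a) - ereal (w * b) = ereal w * (ereal a - ereal b)" by (simp add: right_diff_distrib)
    ultimately show ?thesis using ey real b by simp
  next
    case top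
    show ?thesis
    proof (cases "w = 0")
      case True then show ?thesis by simp
    next
      case False
      then have "ennreal w * x = \<infinity>" using top w by (simp add: ennreal_mult_top)
      then show ?thesis using top ey w False by simp
    qed
  qed
qed

lemma posneg_add:
  fixes A a B b :: ennreal
  assumes "B \<noteq> \<infinity>" "b \<noteq> \<infinity>"
  shows "enn2ereal (A + a) - enn2ereal (B + b) = (enn2ereal A - enn2ereal B) + (enn2ereal a - enn2ereal b)"
proof -
  obtain B' where B: "enn2ereal B = ereal B'" using enn2ereal_fin[of B] assms by auto
  obtain b' where b: "enn2ereal b = ereal b'" using enn2ereal_fin[of b] assms by auto
  have e1: "enn2ereal (A + a) = enn2ereal A + enn2ereal a" by (simp add: plus_ennreal.rep_eq)
  have e2: "enn2ereal (B + b) = enn2ereal B + enn2ereal b" by (simp add: plus_ennreal.rep_eq)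
  have "0 \<le> enn2ereal A" "0 \<le> enn2ereal a" by simp_all
  then show ?thesis unfolding e1 e2 B b
    by (cases "enn2ereal A"; cases "enn2ereal a") (simp_all add: algebra_simps)
qed

lemma sum_posneg:
  fixes w :: "nat \<Rightarrow> real" and pos neg :: "nat \<Rightarrow> ennreal"
  assumes "finite I" "\<forall>c\<in>I. 0 \<le> w c" "\<forall>c\<in>I. neg c \<noteq> \<infinity>"
  shows "enn2ereal (\<Sum>c\<in>I. ennreal (w c) * pos c) - enn2ereal (\<Sum>c\<in>I. ennreal (w c) * neg c)
       = (\<Sum>c\<in>I. ereal (w c) * (enn2ereal (pos c) - enn2ereal (neg c)))"
  using assms
proof (induction I rule: finite_induct)
  case empty
  then show ?case by simp
next
  case (insert c I)
  have fin1: "ennreal (w c) * neg c \<noteq> \<infinity>" using insert by (simp add: ennreal_mult_eq_top_iff)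
  have fin2: "(\<Sum>c\<in>I. ennreal (w c) * neg c) \<noteq> \<infinity>" using insert
    by (simp add: ennreal_mult_eq_top_iff)
  have "enn2ereal (\<Sum>c\<in>insert c I. ennreal (w c) * pos c) - enn2ereal (\<Sum>c\<in>insert c I. ennreal (w c) * neg c)
     = enn2ereal (ennreal (w c) * pos c + (\<Sum>c\<in>I. ennreal (w c) * pos c)) - enn2ereal (ennreal (w c) * neg c + (\<Sum>c\<in>I. ennreal (w c) * neg c))"
    using insert by simp
  also have "\<dots> = (enn2ereal (ennreal (w c) * pos c) - enn2ereal (ennreal (w c) * neg c))
     + (enn2ereal (\<Sum>c\<in>I. ennreal (w c) * pos c) - enn2ereal (\<Sum>c\<in>I. ennreal (w c) * neg c))"
    by (rule posneg_add[OF fin1 fin2])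
  also have "\<dots> = ereal (w c) * (enn2ereal (pos c) - enn2ereal (neg c)) + (\<Sum>c\<in>I. ereal (w c) * (enn2ereal (pos c) - enn2ereal (neg c)))"
    using insert by (simp add: posneg_one)
  also have "\<dots> = (\<Sum>c\<in>insert c I. ereal (w c) * (enn2ereal (pos c) - enn2ereal (neg c)))"
    using insert by simp
  finally show ?case .
qed


lemma ennreal_posneg: "enn2ereal (ennreal t) - enn2ereal (ennreal (- t)) = ereal t"
  by (cases "0 \<le> t") (auto simp: ennreal_neg zero_ennreal.rep_eq)

lemma chain_X:
  fixes C :: nat and xh :: "nat \<Rightarrow> 'x" and PX QX :: "'x measure" and p q :: "nat \<Rightarrow> real"
  assumes xcs: "\<forall>c<C. {xh c} \<in> sets MX" and inj: "inj_on xh {..<C}"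
    and PX: "prob_space PX" "sets PX = sets MX"
    and QX: "prob_space QX" "sets QX = sets MX"
    and q: "\<forall>c<C. 0 \<le> q c"
    and PXeq: "\<forall>c<C. emeasure PX {xh c} = ennreal (p c)"
    and QXeq: "\<forall>c<C. emeasure QX {xh c} = ennreal (q c)"
    and PXconc: "emeasure PX (space PX - xh ` {..<C}) = 0"
    and QXconc: "emeasure QX (space QX - xh ` {..<C}) = 0"
    and pos: "\<forall>c<C. 0 < q c \<longrightarrow> 0 < p c"
  shows "KL QX PX = ereal (\<Sum>c\<in>{c. c<C \<and> 0<q c}. q c * ln (q c / p c))"
proof -
  define I where "I = {c. c<C \<and> 0<q c}"
  have finI: "finite I" unfolding I_def by auto
  have IC: "I \<subseteq> {..<C}" unfolding I_def by auto
  define rX where "rX x = (\<Sum>c\<in>I. ennreal (q c / p c) * indicator {xh c} x)" for x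
  have rXm: "rX \<in> borel_measurable PX"
    unfolding rX_def measurable_cong_sets[OF PX(2) refl] using xcs IC
    by (intro borel_measurable_sum borel_measurable_times_ennreal borel_measurable_const borel_measurable_indicator) auto
  have rXc: "rX (xh c) = (if c \<in> I then ennreal (q c / p c) else 0)" if "c < C" for c
  proof -
    have "rX (xh c) = (\<Sum>c'\<in>I \<inter> {c}. ennreal (q c' / p c') * indicator {xh c'} (xh c))"
      unfolding rX_def using that inj IC finI
      by (intro sum.mono_neutral_right) (auto simp: inj_on_def indicator_def)
    then show ?thesis by (auto simp: Int_absorb1)
  qed
  have QXd: "QX = density PX rX"
  proof (rule measure_eqI)
    show "sets QX = sets (density PX rX)" using PX QX by simp
  next
    fix A assume A: "A \<in> sets QX"
    have "emeasure QX A = (\<integral>\<^sup>+x. indicator A x \<partial>QX)" using A by simp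
    also have "\<dots> = (\<Sum>c<C. emeasure QX {xh c} * indicator A (xh c))"
      by (rule atomX_integral[OF QX(2) xcs inj QXconc])
    also have "\<dots> = (\<Sum>c<C. emeasure PX {xh c} * (rX (xh c) * indicator A (xh c)))"
    proof (intro sum.cong refl)
      fix c assume c: "c \<in> {..<C}"
      show "emeasure QX {xh c} * indicator A (xh c) = emeasure PX {xh c} * (rX (xh c) * indicator A (xh c))"
      proof (cases "c \<in> I")
        case True
        then have "0 < p c" "0 < q c" using pos c unfolding I_def by auto
        then have "ennreal (p c) * ennreal (q c / p c) = ennreal (q c)"
          by (simp add: ennreal_mult[symmetric])
        then show ?thesis using True c QXeq PXeq rXc by (simp add: mult.assoc[symmetric])
      next
        case False
        then have "q c = 0" using q c unfolding I_def by force
        then show ?thesis using False c QXeq PXeq rXc by simp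
      qed
    qed
    also have "\<dots> = (\<integral>\<^sup>+x. rX x * indicator A x \<partial>PX)"
      by (rule atomX_integral[OF PX(2) xcs inj PXconc, symmetric])
    also have "\<dots> = emeasure (density PX rX) A" using A QX PX rXm by (simp add: emeasure_density)
    finally show "emeasure QX A = emeasure (density PX rX) A" .
  qed
  have KLe: "KL QX PX = enn2ereal (\<integral>\<^sup>+x. ennreal (ln (enn2real (rX x))) \<partial>QX)
                  - enn2ereal (\<integral>\<^sup>+x. ennreal (- ln (enn2real (rX x))) \<partial>QX)"
    using QX PX rXm QXd by (intro KL_density_eq) auto
  have int: "(\<integral>\<^sup>+x. ennreal (g (ln (enn2real (rX x)))) \<partial>QX) = (\<Sum>c\<in>I. ennreal (q c) * ennreal (g (ln (q c / p c))))" for g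
  proof -
    have "(\<integral>\<^sup>+x. ennreal (g (ln (enn2real (rX x)))) \<partial>QX) = (\<Sum>c<C. emeasure QX {xh c} * ennreal (g (ln (enn2real (rX (xh c))))))"
      by (rule atomX_integral[OF QX(2) xcs inj QXconc])
    also have "\<dots> = (\<Sum>c\<in>I. emeasure QX {xh c} * ennreal (g (ln (enn2real (rX (xh c))))))"
    proof (rule sum.mono_neutral_right)
      show "finite {..<C}" by simp
      show "I \<subseteq> {..<C}" by (rule IC)
      show "\<forall>c\<in>{..<C} - I. emeasure QX {xh c} * ennreal (g (ln (enn2real (rX (xh c))))) = 0"
      proof
        fix c assume c: "c \<in> {..<C} - I"
        then have "q c = 0" using q unfolding I_def by force
        then show "emeasure QX {xh c} * ennreal (g (ln (enn2real (rX (xh c))))) = 0" using QXeq c by simp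
      qed
    qed
    also have "\<dots> = (\<Sum>c\<in>I. ennreal (q c) * ennreal (g (ln (q c / p c))))"
    proof (intro sum.cong refl)
      fix c assume c: "c \<in> I"
      then have "0 < p c" "0 < q c" "c < C" using pos unfolding I_def by auto
      then show "emeasure QX {xh c} * ennreal (g (ln (enn2real (rX (xh c))))) = ennreal (q c) * ennreal (g (ln (q c / p c)))"
        using QXeq rXc c by simp
    qed
    finally show ?thesis .
  qed
  have "KL QX PX = enn2ereal (\<Sum>c\<in>I. ennreal (q c) * ennreal (ln (q c / p c)))
                  - enn2ereal (\<Sum>c\<in>I. ennreal (q c) * ennreal (- ln (q c / p c)))"
    using KLe int[of "\<lambda>t. t"] int[of "\<lambda>t. - t"] by simp
  also have "\<dots> = (\<Sum>c\<in>I. ereal (q c) * (enn2ereal (ennreal (ln (q c / p c))) - enn2ereal (ennreal (- ln (q c / p c)))))"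
    using finI q IC by (intro sum_posneg) auto
  also have "\<dots> = (\<Sum>c\<in>I. ereal (q c * ln (q c / p c)))"
    by (simp add: ennreal_posneg)
  also have "\<dots> = ereal (\<Sum>c\<in>I. q c * ln (q c / p c))" by simp
  finally show ?thesis unfolding I_def .
qed

lemma shift_negfin:
  fixes l :: "'a \<Rightarrow> real"
  assumes M: "prob_space M" and l[measurable]: "l \<in> borel_measurable M"
    and negfin: "(\<integral>\<^sup>+x. ennreal (- l x) \<partial>M) < \<infinity>"
  shows "(\<integral>\<^sup>+x. ennreal (- (a + l x)) \<partial>M) < \<infinity>"
proof -
  interpret M: prob_space M by fact
  have "(\<integral>\<^sup>+x. ennreal (- (a + l x)) \<partial>M) \<le> (\<integral>\<^sup>+x. ennreal (- l x) + ennreal \<bar>a\<bar> \<partial>M)"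
    by (intro nn_integral_mono ennreal_le_add_aux) auto
  also have "\<dots> = (\<integral>\<^sup>+x. ennreal (- l x) \<partial>M) + ennreal \<bar>a\<bar>"
    by (subst nn_integral_add) (auto simp: M.emeasure_space_1)
  also have "\<dots> < \<infinity>" using negfin by (simp add: less_top)
  finally show ?thesis .
qed

lemma chain_joint:
  fixes MX :: "'x measure" and nu :: "'y measure" and C :: nat and xh :: "nat \<Rightarrow> 'x"
    and P Q :: "('x \<times> 'y) measure" and Pc Qc :: "nat \<Rightarrow> 'y measure" and p q :: "nat \<Rightarrow> real"
  assumes xc: "\<forall>c<C. xh c \<in> space MX" and xcs: "\<forall>c<C. {xh c} \<in> sets MX" and inj: "inj_on xh {..<C}"
    and P: "prob_space P" "sets P = sets (MX \<Otimes>\<^sub>M nu)"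
    and Q: "prob_space Q" "sets Q = sets (MX \<Otimes>\<^sub>M nu)"
    and Pc: "\<forall>c<C. prob_space (Pc c) \<and> sets (Pc c) = sets nu"
    and Qc: "\<forall>c<C. prob_space (Qc c) \<and> sets (Qc c) = sets nu"
    and q: "\<forall>c<C. 0 \<le> q c"
    and Peq: "\<forall>c<C. \<forall>A\<in>sets nu. emeasure P ({xh c} \<times> A) = ennreal (p c) * emeasure (Pc c) A"
    and Qeq: "\<forall>c<C. \<forall>A\<in>sets nu. emeasure Q ({xh c} \<times> A) = ennreal (q c) * emeasure (Qc c) A"
    and Pconc: "emeasure P (space P - (\<Union>c<C. {xh c} \<times> space nu)) = 0"
    and Qconc: "emeasure Q (space Q - (\<Union>c<C. {xh c} \<times> space nu)) = 0"
    and pos: "\<forall>c<C. 0 < q c \<longrightarrow> 0 < p c \<and> absolutely_continuous (Pc c) (Qc c)"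
  shows "KL Q P = ereal (\<Sum>c\<in>{c. c<C \<and> 0<q c}. q c * ln (q c / p c))
                  + (\<Sum>c\<in>{c. c<C \<and> 0<q c}. ereal (q c) * KL (Qc c) (Pc c))"
proof -
  define I where "I = {c. c<C \<and> 0<q c}"
  have finI: "finite I" unfolding I_def by auto
  have IC: "I \<subseteq> {..<C}" unfolding I_def by auto
  define RN where "RN c = RN_deriv (Pc c) (Qc c)" for c
  have dens: "density (Pc c) (RN c) = Qc c" if "c \<in> I" for c
  proof -
    have c: "c < C" "0 < q c" using that unfolding I_def by auto
    interpret sigma_finite_measure "Pc c" using Pc c prob_space_imp_sigma_finite by auto
    show ?thesis unfolding RN_def using c pos Pc Qc by (intro density_RN_deriv) auto
  qed
  have RNnu: "RN c \<in> borel_measurable nu" if "c < C" for c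
  proof -
    have "RN c \<in> borel_measurable (Pc c)" unfolding RN_def by simp
    then show ?thesis using measurable_cong_sets[of "Pc c" nu borel borel] Pc that by auto
  qed
  have RNPc: "RN c \<in> borel_measurable (Pc c)" for c unfolding RN_def by simp
  have RNQc: "RN c \<in> borel_measurable (Qc c)" if "c < C" for c
    using RNnu[OF that] measurable_cong_sets[of "Qc c" nu borel borel] Qc that by auto
  define r where "r z = (\<Sum>c\<in>I. ennreal (q c / p c) * indicator {xh c} (fst z) * RN c (snd z))" for z
  have rm: "r \<in> borel_measurable (MX \<Otimes>\<^sub>M nu)"
    unfolding r_def
  proof (intro borel_measurable_sum)
    fix c assume c: "c \<in> I"
    then have "c < C" using IC by auto
    then have [measurable]: "RN c \<in> borel_measurable nu" "{xh c} \<in> sets MX" using RNnu xcs by auto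
    show "(\<lambda>z. ennreal (q c / p c) * indicator {xh c} (fst z) * RN c (snd z)) \<in> borel_measurable (MX \<Otimes>\<^sub>M nu)"
      by measurable
  qed
  have rmP: "r \<in> borel_measurable P" using rm measurable_cong_sets[OF P(2) refl] by metis
  have rc: "r (xh c, y) = (if c \<in> I then ennreal (q c / p c) * RN c y else 0)" if "c < C" for c y
  proof -
    have "r (xh c, y) = (\<Sum>c'\<in>I \<inter> {c}. ennreal (q c' / p c') * indicator {xh c'} (xh c) * RN c' y)"
      unfolding r_def fst_conv snd_conv using that inj IC finI
      by (intro sum.mono_neutral_right) (auto simp: inj_on_def indicator_def)
    then show ?thesis by (auto simp: Int_absorb1)
  qed
  have Qd: "Q = density P r"
  proof (rule measure_eqI)
    show "sets Q = sets (density P r)" using P Q by simp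
  next
    fix A assume A: "A \<in> sets Q"
    then have A': "A \<in> sets (MX \<Otimes>\<^sub>M nu)" using Q by simp
    have indm: "indicator A \<in> borel_measurable (MX \<Otimes>\<^sub>M nu)" using A' by simp
    have indy: "(\<lambda>y. indicator A (xh c, y) :: ennreal) \<in> borel_measurable nu" if "c < C" for c
      using A' xc[rule_format, OF that] by measurable
    have "emeasure Q A = (\<integral>\<^sup>+z. indicator A z \<partial>Q)" using A by simp
    also have "\<dots> = (\<Sum>c<C. ennreal (q c) * (\<integral>\<^sup>+y. indicator A (xh c, y) \<partial>Qc c))"
      using Qc Qeq Qconc indm by (intro atom_integral[OF Q(2) xc xcs inj]) auto
    also have "\<dots> = (\<Sum>c<C. ennreal (p c) * (\<integral>\<^sup>+y. r (xh c, y) * indicator A (xh c, y) \<partial>Pc c))"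
    proof (intro sum.cong refl)
      fix c assume c: "c \<in> {..<C}"
      show "ennreal (q c) * (\<integral>\<^sup>+y. indicator A (xh c, y) \<partial>Qc c) = ennreal (p c) * (\<integral>\<^sup>+y. r (xh c, y) * indicator A (xh c, y) \<partial>Pc c)"
      proof (cases "c \<in> I")
        case True
        then have pq: "0 < p c" "0 < q c" using pos c unfolding I_def by auto
        have im: "(\<lambda>y. indicator A (xh c, y) :: ennreal) \<in> borel_measurable (Pc c)"
          using indy[of c] c Pc measurable_cong_sets[of "Pc c" nu borel borel] by auto
        have "(\<integral>\<^sup>+y. r (xh c, y) * indicator A (xh c, y) \<partial>Pc c) = (\<integral>\<^sup>+y. ennreal (q c / p c) * (RN c y * indicator A (xh c, y)) \<partial>Pc c)"
          using rc c True by (simp add: mult.assoc)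
        also have "\<dots> = ennreal (q c / p c) * (\<integral>\<^sup>+y. RN c y * indicator A (xh c, y) \<partial>Pc c)"
          using im RNPc by (intro nn_integral_cmult) auto
        also have "(\<integral>\<^sup>+y. RN c y * indicator A (xh c, y) \<partial>Pc c) = (\<integral>\<^sup>+y. indicator A (xh c, y) \<partial>density (Pc c) (RN c))"
          using im RNPc by (subst nn_integral_density) auto
        also have "\<dots> = (\<integral>\<^sup>+y. indicator A (xh c, y) \<partial>Qc c)" using dens True by simp
        finally have "ennreal (p c) * (\<integral>\<^sup>+y. r (xh c, y) * indicator A (xh c, y) \<partial>Pc c)
            = (ennreal (p c) * ennreal (q c / p c)) * (\<integral>\<^sup>+y. indicator A (xh c, y) \<partial>Qc c)"
          by (simp add: mult.assoc)
        also have "ennreal (p c) * ennreal (q c / p c) = ennreal (q c)"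
          using pq by (simp add: ennreal_mult[symmetric])
        finally show ?thesis by simp
      next
        case False
        then have "q c = 0" using q c unfolding I_def by force
        then show ?thesis using False c rc by simp
      qed
    qed
    also have "\<dots> = (\<integral>\<^sup>+z. r z * indicator A z \<partial>P)"
      using Pc Peq Pconc rm indm A' by (intro atom_integral[OF P(2) xc xcs inj, symmetric]) (auto intro!: borel_measurable_times_ennreal)
    also have "\<dots> = emeasure (density P r) A" using A P Q rmP by (simp add: emeasure_density)
    finally show "emeasure Q A = emeasure (density P r) A" .
  qed
  have KLe: "KL Q P = enn2ereal (\<integral>\<^sup>+z. ennreal (ln (enn2real (r z))) \<partial>Q)
                  - enn2ereal (\<integral>\<^sup>+z. ennreal (- ln (enn2real (r z))) \<partial>Q)"
    using Q P rmP Qd by (intro KL_density_eq) auto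
  define a where "a c = ln (q c / p c)" for c
  define l where "l c y = ln (enn2real (RN c y))" for c y
  have lm: "l c \<in> borel_measurable (Qc c)" if "c < C" for c
    unfolding l_def using RNQc[OF that] by measurable
  have aeQ: "AE y in Qc c. ln (enn2real (r (xh c, y))) = a c + l c y" if c: "c \<in> I" for c
  proof -
    have cC: "c < C" and pq: "0 < p c" "0 < q c" using c pos unfolding I_def by auto
    have ae1: "AE y in Qc c. 0 < RN c y" unfolding dens[OF c, symmetric] using RNPc by (subst AE_density) auto
    have "(\<integral>\<^sup>+y. RN c y \<partial>Pc c) = emeasure (density (Pc c) (RN c)) (space (Pc c))"
      using RNPc by (simp add: emeasure_density)
    also have "\<dots> = 1" using dens[OF c] Qc Pc cC prob_space.emeasure_space_1
      by (metis sets_eq_imp_space_eq)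
    finally have "AE y in Pc c. RN c y \<noteq> \<infinity>" using RNPc by (intro nn_integral_PInf_AE) auto
    then have ae2: "AE y in Qc c. RN c y \<noteq> \<infinity>" unfolding dens[OF c, symmetric] using RNPc
      by (subst AE_density) (auto elim: AE_mp)
    show ?thesis using ae1 ae2
    proof eventually_elim
      case (elim y)
      then have t: "0 < enn2real (RN c y)" by (simp add: enn2real_positive_iff less_top)
      have "enn2real (r (xh c, y)) = (q c / p c) * enn2real (RN c y)"
        using rc[OF cC] c pq by (simp add: enn2real_mult)
      moreover have "ln ((q c / p c) * enn2real (RN c y)) = ln (q c / p c) + ln (enn2real (RN c y))"
        using t pq by (intro ln_mult_pos) auto
      ultimately show ?case unfolding a_def l_def by simp
    qed
  qed
  have negfin_l: "(\<integral>\<^sup>+y. ennreal (- l c y) \<partial>Qc c) < \<infinity>" if c: "c \<in> I" for c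
    unfolding l_def using Pc RNPc dens[OF c] c IC by (intro KL_neg_finite[of "Pc c" "RN c" "Qc c"]) auto
  have int: "(\<integral>\<^sup>+z. ennreal (g (ln (enn2real (r z)))) \<partial>Q) = (\<Sum>c\<in>I. ennreal (q c) * (\<integral>\<^sup>+y. ennreal (g (a c + l c y)) \<partial>Qc c))"
    if gm: "g \<in> borel_measurable borel" for g :: "real \<Rightarrow> real"
  proof -
    have "(\<lambda>z. ennreal (g (ln (enn2real (r z))))) \<in> borel_measurable (MX \<Otimes>\<^sub>M nu)"
      using rm gm by measurable
    then have "(\<integral>\<^sup>+z. ennreal (g (ln (enn2real (r z)))) \<partial>Q) = (\<Sum>c<C. ennreal (q c) * (\<integral>\<^sup>+y. ennreal (g (ln (enn2real (r (xh c, y))))) \<partial>Qc c))"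
      using Qc Qeq Qconc by (intro atom_integral[OF Q(2) xc xcs inj]) auto
    also have "\<dots> = (\<Sum>c\<in>I. ennreal (q c) * (\<integral>\<^sup>+y. ennreal (g (ln (enn2real (r (xh c, y))))) \<partial>Qc c))"
    proof (rule sum.mono_neutral_right)
      show "finite {..<C}" by simp
      show "I \<subseteq> {..<C}" by (rule IC)
      show "\<forall>c\<in>{..<C} - I. ennreal (q c) * (\<integral>\<^sup>+y. ennreal (g (ln (enn2real (r (xh c, y))))) \<partial>Qc c) = 0"
      proof
        fix c assume c: "c \<in> {..<C} - I"
        then have "q c = 0" using q unfolding I_def by force
        then show "ennreal (q c) * (\<integral>\<^sup>+y. ennreal (g (ln (enn2real (r (xh c, y))))) \<partial>Qc c) = 0" by simp
      qed
    qed
    also have "\<dots> = (\<Sum>c\<in>I. ennreal (q c) * (\<integral>\<^sup>+y. ennreal (g (a c + l c y)) \<partial>Qc c))"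
    proof (intro sum.cong refl arg_cong2[where f="(*)"] nn_integral_cong_AE)
      fix c assume c: "c \<in> I"
      show "AE y in Qc c. ennreal (g (ln (enn2real (r (xh c, y))))) = ennreal (g (a c + l c y))"
        using aeQ[OF c] by eventually_elim simp
    qed
    finally show ?thesis .
  qed
  have "KL Q P = enn2ereal (\<Sum>c\<in>I. ennreal (q c) * (\<integral>\<^sup>+y. ennreal (a c + l c y) \<partial>Qc c))
               - enn2ereal (\<Sum>c\<in>I. ennreal (q c) * (\<integral>\<^sup>+y. ennreal (- (a c + l c y)) \<partial>Qc c))"
    using KLe int[of "\<lambda>t. t"] int[of "\<lambda>t. - t"] by simp
  also have "\<dots> = (\<Sum>c\<in>I. ereal (q c) * (enn2ereal (\<integral>\<^sup>+y. ennreal (a c + l c y) \<partial>Qc c)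
               - enn2ereal (\<integral>\<^sup>+y. ennreal (- (a c + l c y)) \<partial>Qc c)))"
  proof (rule sum_posneg)
    show "finite I" by (rule finI)
    show "\<forall>c\<in>I. 0 \<le> q c" using q IC by auto
    show "\<forall>c\<in>I. (\<integral>\<^sup>+y. ennreal (- (a c + l c y)) \<partial>Qc c) \<noteq> \<infinity>"
    proof
      fix c assume c: "c \<in> I"
      then have "c < C" using IC by auto
      then show "(\<integral>\<^sup>+y. ennreal (- (a c + l c y)) \<partial>Qc c) \<noteq> \<infinity>"
        using shift_negfin[of "Qc c" "l c" "a c"] Qc lm negfin_l[OF c] by auto
    qed
  qed
  also have "\<dots> = (\<Sum>c\<in>I. ereal (q c) * (ereal (a c) + KL (Qc c) (Pc c)))"
  proof (intro sum.cong refl arg_cong2[where f="(*)"])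
    fix c assume c: "c \<in> I"
    then have cC: "c < C" using IC by auto
    have "enn2ereal (\<integral>\<^sup>+y. ennreal (a c + l c y) \<partial>Qc c) - enn2ereal (\<integral>\<^sup>+y. ennreal (- (a c + l c y)) \<partial>Qc c)
       = ereal (a c) + (enn2ereal (\<integral>\<^sup>+y. ennreal (l c y) \<partial>Qc c) - enn2ereal (\<integral>\<^sup>+y. ennreal (- l c y) \<partial>Qc c))"
      using Qc cC lm negfin_l[OF c] by (intro KL_shift) auto
    moreover have "KL (Qc c) (Pc c) = enn2ereal (\<integral>\<^sup>+y. ennreal (l c y) \<partial>Qc c) - enn2ereal (\<integral>\<^sup>+y. ennreal (- l c y) \<partial>Qc c)"
      unfolding l_def using Qc Pc cC RNPc dens[OF c] by (intro KL_density_eq) auto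
    ultimately show "enn2ereal (\<integral>\<^sup>+y. ennreal (a c + l c y) \<partial>Qc c) - enn2ereal (\<integral>\<^sup>+y. ennreal (- (a c + l c y)) \<partial>Qc c)
       = ereal (a c) + KL (Qc c) (Pc c)" by simp
  qed
  also have "\<dots> = (\<Sum>c\<in>I. ereal (q c * a c) + ereal (q c) * KL (Qc c) (Pc c))"
    by (intro sum.cong refl) (simp add: ereal_distrib_left)
  also have "\<dots> = ereal (\<Sum>c\<in>I. q c * a c) + (\<Sum>c\<in>I. ereal (q c) * KL (Qc c) (Pc c))"
    by (simp add: sum.distrib)
  finally show ?thesis unfolding I_def a_def .
qed

lemma expfam_sets: "sets (expfam_dist nu h T \<theta>) = sets nu"
  unfolding expfam_dist_def by simp

lemma expfam_prob:
  fixes nu :: "'y measure" and T :: "'y \<Rightarrow> 'p::euclidean_space"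
  assumes reg: "regular_expfam nu h T" and th: "\<theta> \<in> Theta nu h T"
  shows "prob_space (expfam_dist nu h T \<theta>)"
proof -
  have hm[measurable]: "h \<in> borel_measurable nu" and h0: "\<forall>y\<in>space nu. 0 \<le> h y"
    and Tm[measurable]: "T \<in> borel_measurable nu" and ai: "affinely_indep_stat nu h T"
    using reg unfolding regular_expfam_def by auto
  define Z where "Z = (\<integral>\<^sup>+ y. ennreal (h y * exp (\<theta> \<bullet> T y)) \<partial>nu)"
  have Zfin: "Z < \<infinity>" using th unfolding Theta_def Z_def by simp
  have fm: "(\<lambda>y. ennreal (h y * exp (\<theta> \<bullet> T y))) \<in> borel_measurable nu" by measurable
  have Z0: "Z \<noteq> 0"
  proof
    assume "Z = 0"
    then have "AE y in nu. ennreal (h y * exp (\<theta> \<bullet> T y)) = 0"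
      unfolding Z_def using fm by (simp add: nn_integral_0_iff_AE)
    then have "AE y in nu. h y * exp (\<theta> \<bullet> T y) \<le> 0" by (simp add: ennreal_eq_0_iff)
    then have ae: "AE y in nu. h y = 0"
      using AE_space
    proof eventually_elim
      case (elim y)
      then have "0 \<le> h y" using h0 by auto
      moreover have "0 < exp (\<theta> \<bullet> T y)" by simp
      ultimately show "h y = 0" using elim(1) by (smt (verit) mult_pos_pos)
    qed
    obtain a :: 'p where a: "a \<in> Basis" using nonempty_Basis by blast
    then have "a \<noteq> 0" by (auto simp: nonzero_Basis)
    moreover have "AE y in density nu (\<lambda>y. ennreal (h y)). a \<bullet> T y = 0"
      using ae by (subst AE_density) (auto elim!: AE_mp)
    ultimately show False using ai unfolding affinely_indep_stat_def by blast
  qed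
  obtain z where z: "Z = ennreal z" "0 < z" using Zfin Z0
    by (cases Z) (auto simp: ennreal_eq_0_iff)
  have Psi: "Psi nu h T \<theta> = ln z" unfolding Psi_def using z Z_def by simp
  have "emeasure (expfam_dist nu h T \<theta>) (space (expfam_dist nu h T \<theta>))
      = (\<integral>\<^sup>+ y. ennreal (h y * exp (\<theta> \<bullet> T y - ln z)) \<partial>nu)"
    unfolding expfam_dist_def expfam_dens_def Psi
    by (simp add: emeasure_density nn_integral_set_ennreal)
  also have "\<dots> = (\<integral>\<^sup>+ y. ennreal (h y * exp (\<theta> \<bullet> T y)) * ennreal (1 / z) \<partial>nu)"
  proof (intro nn_integral_cong)
    fix y assume "y \<in> space nu"
    have eqy: "h y * exp (\<theta> \<bullet> T y - ln z) = h y * exp (\<theta> \<bullet> T y) * (1 / z)"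
      using z by (simp add: exp_diff)
    show "ennreal (h y * exp (\<theta> \<bullet> T y - ln z)) = ennreal (h y * exp (\<theta> \<bullet> T y)) * ennreal (1 / z)"
      unfolding eqy using z by (intro ennreal_mult'') simp
  qed
  also have "\<dots> = Z * ennreal (1 / z)" unfolding Z_def using fm by (rule nn_integral_multc)
  also have "\<dots> = 1" using z by (simp add: ennreal_mult[symmetric])
  finally show ?thesis by (rule prob_spaceI)
qed

lemma KL_self:
  assumes "prob_space M"
  shows "KL M M = 0"
proof -
  have "KL M M = enn2ereal (\<integral>\<^sup>+x. ennreal (ln (enn2real ((\<lambda>_. 1::ennreal) x))) \<partial>M)
                  - enn2ereal (\<integral>\<^sup>+x. ennreal (- ln (enn2real ((\<lambda>_. 1::ennreal) x))) \<partial>M)"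
    using assms by (intro KL_density_eq) (auto simp: density_1)
  then show ?thesis by (simp add: zero_ennreal.rep_eq)
qed

lemma KL_nonneg:
  assumes M: "prob_space M" and N: "prob_space N" and s: "sets M = sets N" and ac: "absolutely_continuous N M"
  shows "0 \<le> KL M N"
proof -
  interpret sigma_finite_measure N using N prob_space_imp_sigma_finite by auto
  have d: "M = density N (RN_deriv N M)" using density_RN_deriv[OF ac s] by simp
  show ?thesis
    using KL_density_eq[OF M N s borel_measurable_RN_deriv d] KL_nonneg_aux[OF M N borel_measurable_RN_deriv d]
    by simp
qed

lemma KL_fin_ac:
  assumes "KL M N < \<infinity>"
  shows "sets M = sets N" "absolutely_continuous N M"
  using assms unfolding KL_def by (auto split: if_splits)

lemma conc_from_sum:
  fixes M :: "('x \<times> 'y) measure" and C :: nat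
  assumes M: "prob_space M" and sM: "sets M = sets (MX \<Otimes>\<^sub>M nu)" and xcs: "\<forall>c<C. {xh c} \<in> sets MX"
    and inj: "inj_on xh {..<C}" and sum: "(\<Sum>c<C. emeasure M ({xh c} \<times> space nu)) = 1"
  shows "emeasure M (space M - (\<Union>c<C. {xh c} \<times> space nu)) = 0"
proof -
  interpret M: prob_space M by fact
  have Sc: "{xh c} \<times> space nu \<in> sets M" if "c < C" for c
    unfolding sM using xcs that by (intro pair_measureI) auto
  have U: "(\<Union>c<C. {xh c} \<times> space nu) \<in> sets M" by (rule sets.finite_UN) (auto simp: Sc)
  have "emeasure M (\<Union>c<C. {xh c} \<times> space nu) = 1"
    using sum Sc inj by (subst sum_emeasure[symmetric]) (auto simp: disjoint_family_on_def inj_on_def)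
  then show ?thesis using U by (simp add: emeasure_compl M.emeasure_space_1)
qed

lemma sum_from_conc:
  fixes M :: "('x \<times> 'y) measure" and C :: nat
  assumes M: "prob_space M" and sM: "sets M = sets (MX \<Otimes>\<^sub>M nu)" and xcs: "\<forall>c<C. {xh c} \<in> sets MX"
    and inj: "inj_on xh {..<C}" and conc: "emeasure M (space M - (\<Union>c<C. {xh c} \<times> space nu)) = 0"
  shows "(\<Sum>c<C. emeasure M ({xh c} \<times> space nu)) = 1"
proof -
  interpret M: prob_space M by fact
  have Sc: "{xh c} \<times> space nu \<in> sets M" if "c < C" for c
    unfolding sM using xcs that by (intro pair_measureI) auto
  have U: "(\<Union>c<C. {xh c} \<times> space nu) \<in> sets M" by (rule sets.finite_UN) (auto simp: Sc)
  have "emeasure M (\<Union>c<C. {xh c} \<times> space nu) + emeasure M (space M - (\<Union>c<C. {xh c} \<times> space nu))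
      = emeasure M ((\<Union>c<C. {xh c} \<times> space nu) \<union> (space M - (\<Union>c<C. {xh c} \<times> space nu)))"
    using U by (intro plus_emeasure) auto
  also have "(\<Union>c<C. {xh c} \<times> space nu) \<union> (space M - (\<Union>c<C. {xh c} \<times> space nu)) = space M"
    using sets.sets_into_space[OF U] by auto
  finally have "emeasure M (\<Union>c<C. {xh c} \<times> space nu) = 1" using conc by (simp add: M.emeasure_space_1)
  then show ?thesis
    using Sc inj by (subst sum_emeasure) (auto simp: disjoint_family_on_def inj_on_def)
qed

lemma concX_from_sum:
  fixes C :: nat
  assumes M: "prob_space M" and sM: "sets M = sets MX" and xcs: "\<forall>c<C. {xh c} \<in> sets MX"
    and inj: "inj_on xh {..<C}" and sum: "(\<Sum>c<C. emeasure M {xh c}) = 1"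
  shows "emeasure M (space M - xh ` {..<C}) = 0"
proof -
  interpret M: prob_space M by fact
  have eqU: "xh ` {..<C} = (\<Union>c<C. {xh c})" by auto
  have U: "(\<Union>c<C. {xh c}) \<in> sets M" using xcs sM by (intro sets.finite_UN) auto
  have "emeasure M (\<Union>c<C. {xh c}) = 1"
    using sum xcs sM inj by (subst sum_emeasure[symmetric]) (auto simp: disjoint_family_on_def inj_on_def)
  then show ?thesis using U unfolding eqU by (simp add: emeasure_compl M.emeasure_space_1)
qed

lemma sum_from_concX:
  fixes C :: nat
  assumes M: "prob_space M" and sM: "sets M = sets MX" and xcs: "\<forall>c<C. {xh c} \<in> sets MX"
    and inj: "inj_on xh {..<C}" and conc: "emeasure M (space M - xh ` {..<C}) = 0"
  shows "(\<Sum>c<C. emeasure M {xh c}) = 1"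
proof -
  interpret M: prob_space M by fact
  have eqU: "xh ` {..<C} = (\<Union>c<C. {xh c})" by auto
  have U: "(\<Union>c<C. {xh c}) \<in> sets M" using xcs sM by (intro sets.finite_UN) auto
  have "emeasure M (\<Union>c<C. {xh c}) + emeasure M (space M - (\<Union>c<C. {xh c}))
      = emeasure M ((\<Union>c<C. {xh c}) \<union> (space M - (\<Union>c<C. {xh c})))"
    using U by (intro plus_emeasure) auto
  also have "(\<Union>c<C. {xh c}) \<union> (space M - (\<Union>c<C. {xh c})) = space M"
    using sets.sets_into_space[OF U] by auto
  finally have "emeasure M (\<Union>c<C. {xh c}) = 1" using conc unfolding eqU by (simp add: M.emeasure_space_1)
  then show ?thesis
    using xcs sM inj by (subst sum_emeasure) (auto simp: disjoint_family_on_def inj_on_def)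
qed

theorem proposition2p6:
  fixes Xs :: "'x::euclidean_space set" and Ys :: "'y::euclidean_space set"
    and nu :: "'y measure" and h :: "'y \<Rightarrow> real" and T :: "'y \<Rightarrow> 'p::euclidean_space"
    and C :: nat and xh :: "nat \<Rightarrow> 'x" and ph :: "nat \<Rightarrow> real" and \<theta>h :: "nat \<Rightarrow> 'p"
    and Ph :: "('x \<times> 'y) measure" and \<epsilon> :: real
  defines "MX \<equiv> restrict_space borel Xs"
  assumes nu_sets: "sets nu = sets (restrict_space borel Ys)"
    and reg: "regular_expfam nu h T"
    and xh_in: "\<forall>c<C. xh c \<in> Xs" and xh_distinct: "inj_on xh {..<C}"
    and ph_nonneg: "\<forall>c<C. 0 \<le> ph c" and ph_sum: "(\<Sum>c<C. ph c) = 1"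
    and \<theta>h_in: "\<forall>c<C. \<theta>h c \<in> Theta nu h T"
    and Ph_prob: "prob_space Ph" and Ph_sets: "sets Ph = sets (MX \<Otimes>\<^sub>M nu)"
    and Ph_X: "\<forall>A\<in>sets MX. measure (distr Ph MX fst) A = (\<Sum>c\<in>{c. c < C \<and> xh c \<in> A}. ph c)"
    and Ph_cond: "\<forall>c<C. \<forall>A\<in>sets nu.
                    measure Ph ({xh c} \<times> A) = ph c * measure (expfam_dist nu h T (\<theta>h c)) A"
    and eps: "0 \<le> \<epsilon>"
  shows "KLball MX nu h T C xh Ph \<epsilon> = (\<Union>\<rho>\<in>{\<rho>. \<forall>c<C. 0 \<le> \<rho> c}. Bball MX nu h T C xh Ph \<theta>h \<epsilon> \<rho>)"
proof -
  interpret Ph: prob_space Ph by fact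
  have spMX: "space MX = Xs" unfolding MX_def by (simp add: space_restrict_space)
  have xc: "\<forall>c<C. xh c \<in> space MX" using xh_in spMX by simp
  have xcs: "\<forall>c<C. {xh c} \<in> sets MX"
  proof (intro allI impI)
    fix c assume "c < C"
    then have "{xh c} = Xs \<inter> {xh c}" using xh_in by auto
    moreover have "{xh c} \<in> sets borel" by simp
    ultimately show "{xh c} \<in> sets MX" unfolding MX_def sets_restrict_space by blast
  qed
  define Pc where "Pc c = expfam_dist nu h T (\<theta>h c)" for c
  have Pc: "\<forall>c<C. prob_space (Pc c) \<and> sets (Pc c) = sets nu"
    unfolding Pc_def using expfam_prob[OF reg] \<theta>h_in by (auto simp: expfam_sets)
  define PX where "PX = distr Ph MX fst"
  have fstm: "fst \<in> measurable Ph MX"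
    unfolding measurable_cong_sets[OF Ph_sets refl] by simp
  have PX: "prob_space PX" "sets PX = sets MX"
    unfolding PX_def using Ph.prob_space_distr[OF fstm] by auto
  interpret PXi: prob_space PX by (rule PX(1))
  have PXeq: "\<forall>c<C. emeasure PX {xh c} = ennreal (ph c)"
  proof (intro allI impI)
    fix c assume c: "c < C"
    have "{c'. c' < C \<and> xh c' \<in> {xh c}} = {c}" using c xh_distinct by (auto simp: inj_on_def)
    then have "measure PX {xh c} = ph c" using Ph_X xcs c unfolding PX_def by auto
    then show "emeasure PX {xh c} = ennreal (ph c)"
      using PXi.emeasure_eq_measure by simp
  qed
  have sumP: "(\<Sum>c<C. ennreal (ph c)) = 1" using ph_nonneg ph_sum by (subst sum_ennreal) auto
  have "(\<Sum>c<C. emeasure PX {xh c}) = 1" using PXeq sumP by simp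
  then have PXconc: "emeasure PX (space PX - xh ` {..<C}) = 0"
    using PX xcs xh_distinct by (intro concX_from_sum[of PX MX]) auto
  have Peq: "\<forall>c<C. \<forall>A\<in>sets nu. emeasure Ph ({xh c} \<times> A) = ennreal (ph c) * emeasure (Pc c) A"
  proof (intro allI impI ballI)
    fix c A assume c: "c < C" and A: "A \<in> sets nu"
    interpret Pcc: prob_space "Pc c" using Pc c by auto
    have "{xh c} \<times> A \<in> sets Ph" unfolding Ph_sets using xcs c A by (intro pair_measureI) auto
    then have "emeasure Ph ({xh c} \<times> A) = ennreal (ph c * measure (Pc c) A)"
      using Ph_cond c A unfolding Pc_def by (simp add: Ph.emeasure_eq_measure)
    also have "\<dots> = ennreal (ph c) * emeasure (Pc c) A"
      using ph_nonneg c A Pc by (simp add: ennreal_mult Pcc.emeasure_eq_measure)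
    finally show "emeasure Ph ({xh c} \<times> A) = ennreal (ph c) * emeasure (Pc c) A" .
  qed
  have PS: "emeasure Ph ({xh c} \<times> space nu) = ennreal (ph c)" if "c < C" for c
    using Peq that Pc prob_space.emeasure_space_1[of "Pc c"] sets_eq_imp_space_eq[of "Pc c" nu]
    by auto
  have "(\<Sum>c<C. emeasure Ph ({xh c} \<times> space nu)) = 1" using PS sumP by simp
  then have Pconc: "emeasure Ph (space Ph - (\<Union>c<C. {xh c} \<times> space nu)) = 0"
    using Ph_prob Ph_sets xcs xh_distinct by (intro conc_from_sum[of Ph MX nu]) auto
  show ?thesis
  proof (rule set_eqI iffI)+
    fix Q assume "Q \<in> KLball MX nu h T C xh Ph \<epsilon>"
    then obtain QX \<theta> where Qprob: "prob_space Q" and Qsets: "sets Q = sets (MX \<Otimes>\<^sub>M nu)"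
      and QXprob: "prob_space QX" and QXsets: "sets QX = sets MX" and thin: "\<forall>c<C. \<theta> c \<in> Theta nu h T"
      and cd: "cond_decomp MX nu h T C xh Q QX \<theta>" and KLle: "KL Q Ph \<le> ereal \<epsilon>"
      unfolding KLball_def by blast
    interpret Qi: prob_space Q by (rule Qprob)
    interpret QXi: prob_space QX by (rule QXprob)
    have "KL Q Ph < \<infinity>" using le_less_trans[OF KLle, of \<infinity>] by simp
    then have acQ: "absolutely_continuous Ph Q" by (rule KL_fin_ac)
    have nullP: "emeasure Q A = 0" if "A \<in> sets Ph" "emeasure Ph A = 0" for A
      using acQ that unfolding absolutely_continuous_def by auto
    define q where "q c = measure QX {xh c}" for c
    have q0: "\<forall>c<C. 0 \<le> q c" unfolding q_def by simp
    have QXeq: "\<forall>c<C. emeasure QX {xh c} = ennreal (q c)" unfolding q_def using QXi.emeasure_eq_measure by simp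
    define Qc0 where "Qc0 c = expfam_dist nu h T (\<theta> c)" for c
    have Qc0: "\<forall>c<C. prob_space (Qc0 c) \<and> sets (Qc0 c) = sets nu"
      unfolding Qc0_def using expfam_prob[OF reg] thin by (auto simp: expfam_sets)
    have Qeq0: "\<forall>c<C. \<forall>A\<in>sets nu. emeasure Q ({xh c} \<times> A) = ennreal (q c) * emeasure (Qc0 c) A"
      using cd QXeq unfolding cond_decomp_def Qc0_def by auto
    have QS: "emeasure Q ({xh c} \<times> space nu) = ennreal (q c)" if "c < C" for c
      using Qeq0 that Qc0 prob_space.emeasure_space_1[of "Qc0 c"] sets_eq_imp_space_eq[of "Qc0 c" nu]
      by auto
    have spQ: "space Q = space Ph" using Qsets Ph_sets sets_eq_imp_space_eq by metis
    have Qconc: "emeasure Q (space Q - (\<Union>c<C. {xh c} \<times> space nu)) = 0"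
    proof -
      have Sc: "{xh c} \<times> space nu \<in> sets Ph" if "c < C" for c
        unfolding Ph_sets using xcs that by (intro pair_measureI) auto
      have U: "(\<Union>c<C. {xh c} \<times> space nu) \<in> sets Ph" by (rule sets.finite_UN) (auto simp: Sc)
      show ?thesis unfolding spQ using U Pconc by (intro nullP) auto
    qed
    have "(\<Sum>c<C. emeasure Q ({xh c} \<times> space nu)) = 1"
      using Qprob Qsets xcs xh_distinct Qconc by (intro sum_from_conc[of Q MX nu]) auto
    then have "(\<Sum>c<C. emeasure QX {xh c}) = 1" using QS QXeq by simp
    then have QXconc: "emeasure QX (space QX - xh ` {..<C}) = 0"
      using QXprob QXsets xcs xh_distinct by (intro concX_from_sum[of QX MX]) auto
    have pos0: "\<forall>c<C. 0 < q c \<longrightarrow> 0 < ph c \<and> absolutely_continuous (Pc c) (Qc0 c)"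
    proof (intro allI impI conjI)
      fix c assume c: "c < C" and qc: "0 < q c"
      have Sc: "{xh c} \<times> space nu \<in> sets Ph" unfolding Ph_sets using xcs c by (intro pair_measureI) auto
      show "0 < ph c"
      proof (rule ccontr)
        assume "\<not> 0 < ph c"
        then have "ph c = 0" using ph_nonneg c by force
        then have "emeasure Q ({xh c} \<times> space nu) = 0" using PS[OF c] Sc by (intro nullP) auto
        then show False using QS[OF c] qc by simp
      qed
      show "absolutely_continuous (Pc c) (Qc0 c)"
        unfolding absolutely_continuous_def
      proof
        fix A assume A: "A \<in> null_sets (Pc c)"
        then have As: "A \<in> sets nu" and A0: "emeasure (Pc c) A = 0" using Pc c by auto
        have "{xh c} \<times> A \<in> sets Ph" unfolding Ph_sets using xcs c As by (intro pair_measureI) auto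
        moreover have "emeasure Ph ({xh c} \<times> A) = 0" using Peq c As A0 by simp
        ultimately have "emeasure Q ({xh c} \<times> A) = 0" by (rule nullP)
        then have "emeasure (Qc0 c) A = 0" using Qeq0 c As qc by simp
        then show "A \<in> null_sets (Qc0 c)" using As Qc0 c by auto
      qed
    qed
    define \<theta>' where "\<theta>' c = (if 0 < q c then \<theta> c else \<theta>h c)" for c
    define Qc where "Qc c = expfam_dist nu h T (\<theta>' c)" for c
    have thin': "\<forall>c<C. \<theta>' c \<in> Theta nu h T" unfolding \<theta>'_def using thin \<theta>h_in by auto
    have Qc: "\<forall>c<C. prob_space (Qc c) \<and> sets (Qc c) = sets nu"
      unfolding Qc_def using expfam_prob[OF reg] thin' by (auto simp: expfam_sets)
    have Qc_pos: "Qc c = Qc0 c" if "0 < q c" for c using that unfolding Qc_def Qc0_def \<theta>'_def by simp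
    have Qc_zero: "Qc c = Pc c" if "\<not> 0 < q c" for c using that unfolding Qc_def Pc_def \<theta>'_def by simp
    have Qeq: "\<forall>c<C. \<forall>A\<in>sets nu. emeasure Q ({xh c} \<times> A) = ennreal (q c) * emeasure (Qc c) A"
    proof (intro allI impI ballI)
      fix c A assume c: "c < C" and A: "A \<in> sets nu"
      show "emeasure Q ({xh c} \<times> A) = ennreal (q c) * emeasure (Qc c) A"
      proof (cases "0 < q c")
        case True then show ?thesis using Qeq0 c A Qc_pos by simp
      next
        case False
        then have "q c = 0" using q0 c by force
        then show ?thesis using Qeq0 c A by simp
      qed
    qed
    have pos: "\<forall>c<C. 0 < q c \<longrightarrow> 0 < ph c \<and> absolutely_continuous (Pc c) (Qc c)"
      using pos0 Qc_pos by auto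
    define I where "I = {c. c<C \<and> 0<q c}"
    have KLQ: "KL Q Ph = ereal (\<Sum>c\<in>I. q c * ln (q c / ph c)) + (\<Sum>c\<in>I. ereal (q c) * KL (Qc c) (Pc c))"
      unfolding I_def
      by (rule chain_joint[OF xc xcs xh_distinct Ph_prob Ph_sets Qprob Qsets Pc Qc q0 Peq Qeq Pconc Qconc pos])
    have KLX: "KL QX PX = ereal (\<Sum>c\<in>I. q c * ln (q c / ph c))"
      unfolding I_def using pos
      by (intro chain_X[OF xcs xh_distinct PX QXprob QXsets q0 PXeq QXeq PXconc QXconc]) auto
    have KLc0: "0 \<le> KL (Qc c) (Pc c)" if "c \<in> I" for c
      using that pos Qc Pc unfolding I_def by (intro KL_nonneg) auto
    have finI: "finite I" unfolding I_def by auto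
    have term_le: "ereal (q c) * KL (Qc c) (Pc c) \<le> (\<Sum>c\<in>I. ereal (q c) * KL (Qc c) (Pc c))" if c: "c \<in> I" for c
    proof -
      have "(\<Sum>c\<in>I. ereal (q c) * KL (Qc c) (Pc c)) = ereal (q c) * KL (Qc c) (Pc c) + (\<Sum>c\<in>I - {c}. ereal (q c) * KL (Qc c) (Pc c))"
        by (rule sum.remove[OF finI c])
      moreover have "0 \<le> (\<Sum>c\<in>I - {c}. ereal (q c) * KL (Qc c) (Pc c))"
        using KLc0 q0 unfolding I_def by (intro sum_nonneg) (auto simp: ereal_zero_le_0_iff)
      ultimately show ?thesis by (simp add: add_increasing2)
    qed
    have sum_fin: "(\<Sum>c\<in>I. ereal (q c) * KL (Qc c) (Pc c)) < \<infinity>"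
      using KLle KLQ by (auto simp: less_top[symmetric])
    have KLc_fin: "KL (Qc c) (Pc c) < \<infinity>" if c: "c \<in> I" for c
    proof (rule ccontr)
      assume "\<not> KL (Qc c) (Pc c) < \<infinity>"
      then have "KL (Qc c) (Pc c) = \<infinity>" by (simp add: not_less top_unique)
      then have inf: "ereal (q c) * KL (Qc c) (Pc c) = \<infinity>" using c unfolding I_def by simp
      have "\<infinity> \<le> (\<Sum>c\<in>I. ereal (q c) * KL (Qc c) (Pc c))" using term_le[OF c] unfolding inf .
      then show False using sum_fin by simp
    qed
    define \<rho> where "\<rho> c = (if 0 < q c then real_of_ereal (KL (Qc c) (Pc c)) else 0)" for c
    have KLc_eq: "KL (Qc c) (Pc c) = ereal (\<rho> c)" if c: "c \<in> I" for c
      using KLc0[OF c] KLc_fin[OF c] c unfolding \<rho>_def I_def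
      by (cases "KL (Qc c) (Pc c)") auto
    have \<rho>0: "\<forall>c<C. 0 \<le> \<rho> c"
      unfolding \<rho>_def using KLc0 unfolding I_def by (auto intro: real_of_ereal_pos)
    have "Q \<in> Bball MX nu h T C xh Ph \<theta>h \<epsilon> \<rho>"
      unfolding Bball_def
    proof (intro CollectI conjI exI)
      show "prob_space Q" "sets Q = sets (MX \<Otimes>\<^sub>M nu)" "prob_space QX" "sets QX = sets MX" by fact+
      show "\<forall>c<C. \<theta>' c \<in> Theta nu h T" by (rule thin')
      show "cond_decomp MX nu h T C xh Q QX \<theta>'"
        unfolding cond_decomp_def using Qeq QXeq unfolding Qc_def by auto
      show "\<forall>c<C. KL (expfam_dist nu h T (\<theta>' c)) (expfam_dist nu h T (\<theta>h c)) \<le> ereal (\<rho> c)"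
      proof (intro allI impI)
        fix c assume c: "c < C"
        show "KL (expfam_dist nu h T (\<theta>' c)) (expfam_dist nu h T (\<theta>h c)) \<le> ereal (\<rho> c)"
        proof (cases "0 < q c")
          case True
          then show ?thesis using KLc_eq[of c] c unfolding I_def Qc_def Pc_def by simp
        next
          case False
          then have "KL (Qc c) (Pc c) = 0" using Qc_zero[OF False] KL_self[of "Pc c"] Pc c by simp
          then show ?thesis using False unfolding Qc_def Pc_def \<rho>_def by simp
        qed
      qed
      have "(\<Sum>c<C. \<rho> c * measure QX {xh c}) = (\<Sum>c\<in>I. \<rho> c * q c)"
        unfolding q_def[symmetric] I_def
        by (rule sum.mono_neutral_right) (auto simp: \<rho>_def)
      also have "\<dots> = (\<Sum>c\<in>I. q c * \<rho> c)" by (simp add: mult.commute)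
      finally have "(\<Sum>c<C. \<rho> c * measure QX {xh c}) = (\<Sum>c\<in>I. q c * \<rho> c)" .
      then have "ereal (\<Sum>c<C. \<rho> c * measure QX {xh c}) = (\<Sum>c\<in>I. ereal (q c) * KL (Qc c) (Pc c))"
        using KLc_eq by simp
      then show "KL QX (distr Ph MX fst) + ereal (\<Sum>c<C. \<rho> c * measure QX {xh c}) \<le> ereal \<epsilon>"
        using KLX KLQ KLle unfolding PX_def by simp
    qed
    then show "Q \<in> (\<Union>\<rho>\<in>{\<rho>. \<forall>c<C. 0 \<le> \<rho> c}. Bball MX nu h T C xh Ph \<theta>h \<epsilon> \<rho>)"
      using \<rho>0 by blast
  next
    fix Q assume "Q \<in> (\<Union>\<rho>\<in>{\<rho>. \<forall>c<C. 0 \<le> \<rho> c}. Bball MX nu h T C xh Ph \<theta>h \<epsilon> \<rho>)"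
    then obtain \<rho> where \<rho>0: "\<forall>c<C. 0 \<le> \<rho> c" and "Q \<in> Bball MX nu h T C xh Ph \<theta>h \<epsilon> \<rho>" by blast
    then obtain QX \<theta> where Qprob: "prob_space Q" and Qsets: "sets Q = sets (MX \<Otimes>\<^sub>M nu)"
      and QXprob: "prob_space QX" and QXsets: "sets QX = sets MX" and thin: "\<forall>c<C. \<theta> c \<in> Theta nu h T"
      and cd: "cond_decomp MX nu h T C xh Q QX \<theta>"
      and KLcle: "\<forall>c<C. KL (expfam_dist nu h T (\<theta> c)) (expfam_dist nu h T (\<theta>h c)) \<le> ereal (\<rho> c)"
      and KLXle: "KL QX (distr Ph MX fst) + ereal (\<Sum>c<C. \<rho> c * measure QX {xh c}) \<le> ereal \<epsilon>"
      unfolding Bball_def by blast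
    interpret Qi: prob_space Q by (rule Qprob)
    interpret QXi: prob_space QX by (rule QXprob)
    define Qc where "Qc c = expfam_dist nu h T (\<theta> c)" for c
    have Qc: "\<forall>c<C. prob_space (Qc c) \<and> sets (Qc c) = sets nu"
      unfolding Qc_def using expfam_prob[OF reg] thin by (auto simp: expfam_sets)
    have "KL QX PX < \<infinity>"
    proof (rule ccontr)
      assume "\<not> KL QX PX < \<infinity>"
      then have "KL QX PX = \<infinity>" by (simp add: not_less top_unique)
      then show False using KLXle unfolding PX_def by simp
    qed
    then have acX: "absolutely_continuous PX QX" by (rule KL_fin_ac)
    have nullX: "emeasure QX A = 0" if "A \<in> sets PX" "emeasure PX A = 0" for A
      using acX that unfolding absolutely_continuous_def by auto
    define q where "q c = measure QX {xh c}" for c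
    have q0: "\<forall>c<C. 0 \<le> q c" unfolding q_def by simp
    have QXeq: "\<forall>c<C. emeasure QX {xh c} = ennreal (q c)" unfolding q_def using QXi.emeasure_eq_measure by simp
    have spQX: "space QX = space PX" using QXsets PX(2) sets_eq_imp_space_eq by metis
    have QXconc: "emeasure QX (space QX - xh ` {..<C}) = 0"
    proof -
      have "xh ` {..<C} = (\<Union>c<C. {xh c})" by auto
      also have "\<dots> \<in> sets PX" using xcs PX(2) by (intro sets.finite_UN) auto
      finally have "xh ` {..<C} \<in> sets PX" .
      then show ?thesis unfolding spQX using PXconc by (intro nullX) auto
    qed
    have Qeq: "\<forall>c<C. \<forall>A\<in>sets nu. emeasure Q ({xh c} \<times> A) = ennreal (q c) * emeasure (Qc c) A"
      using cd QXeq unfolding cond_decomp_def Qc_def by auto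
    have QS: "emeasure Q ({xh c} \<times> space nu) = ennreal (q c)" if "c < C" for c
      using Qeq that Qc prob_space.emeasure_space_1[of "Qc c"] sets_eq_imp_space_eq[of "Qc c" nu]
      by auto
    have "(\<Sum>c<C. emeasure QX {xh c}) = 1"
      using QXprob QXsets xcs xh_distinct QXconc by (intro sum_from_concX[of QX MX]) auto
    then have "(\<Sum>c<C. emeasure Q ({xh c} \<times> space nu)) = 1" using QS QXeq by simp
    then have Qconc: "emeasure Q (space Q - (\<Union>c<C. {xh c} \<times> space nu)) = 0"
      using Qprob Qsets xcs xh_distinct by (intro conc_from_sum[of Q MX nu]) auto
    have pos: "\<forall>c<C. 0 < q c \<longrightarrow> 0 < ph c \<and> absolutely_continuous (Pc c) (Qc c)"
    proof (intro allI impI conjI)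
      fix c assume c: "c < C" and qc: "0 < q c"
      show "0 < ph c"
      proof (rule ccontr)
        assume "\<not> 0 < ph c"
        then have "ph c = 0" using ph_nonneg c by force
        then have "emeasure QX {xh c} = 0" using PXeq c xcs PX(2) by (intro nullX) auto
        then show False using QXeq c qc by simp
      qed
      have "KL (Qc c) (Pc c) \<le> ereal (\<rho> c)" using KLcle c unfolding Qc_def Pc_def by auto
      then have "KL (Qc c) (Pc c) < \<infinity>" using le_less_trans[of _ "ereal (\<rho> c)" \<infinity>] by simp
      then show "absolutely_continuous (Pc c) (Qc c)" by (rule KL_fin_ac)
    qed
    define I where "I = {c. c<C \<and> 0<q c}"
    have KLQ: "KL Q Ph = ereal (\<Sum>c\<in>I. q c * ln (q c / ph c)) + (\<Sum>c\<in>I. ereal (q c) * KL (Qc c) (Pc c))"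
      unfolding I_def
      by (rule chain_joint[OF xc xcs xh_distinct Ph_prob Ph_sets Qprob Qsets Pc Qc q0 Peq Qeq Pconc Qconc pos])
    have KLX: "KL QX PX = ereal (\<Sum>c\<in>I. q c * ln (q c / ph c))"
      unfolding I_def using pos
      by (intro chain_X[OF xcs xh_distinct PX QXprob QXsets q0 PXeq QXeq PXconc QXconc]) auto
    have "(\<Sum>c\<in>I. ereal (q c) * KL (Qc c) (Pc c)) \<le> (\<Sum>c\<in>I. ereal (q c) * ereal (\<rho> c))"
    proof (rule sum_mono)
      fix c assume c: "c \<in> I"
      then have "c < C" unfolding I_def by auto
      then show "ereal (q c) * KL (Qc c) (Pc c) \<le> ereal (q c) * ereal (\<rho> c)"
        using KLcle q0 unfolding Qc_def Pc_def by (intro ereal_mult_left_mono) auto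
    qed
    also have "\<dots> = ereal (\<Sum>c<C. \<rho> c * measure QX {xh c})"
    proof -
      have "(\<Sum>c<C. \<rho> c * measure QX {xh c}) = (\<Sum>c\<in>I. \<rho> c * q c)"
        unfolding q_def[symmetric] I_def
        by (rule sum.mono_neutral_right) (use q0 in force)+
      also have "\<dots> = (\<Sum>c\<in>I. q c * \<rho> c)" by (simp add: mult.commute)
      finally have "(\<Sum>c<C. \<rho> c * measure QX {xh c}) = (\<Sum>c\<in>I. q c * \<rho> c)" .
      then show ?thesis by simp
    qed
    finally have "KL Q Ph \<le> KL QX PX + ereal (\<Sum>c<C. \<rho> c * measure QX {xh c})"
      unfolding KLQ KLX by (rule add_left_mono)
    also have "\<dots> \<le> ereal \<epsilon>" using KLXle unfolding PX_def .
    finally have KLle: "KL Q Ph \<le> ereal \<epsilon>" .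
    show "Q \<in> KLball MX nu h T C xh Ph \<epsilon>"
      unfolding KLball_def using Qprob Qsets QXprob QXsets thin cd KLle by blast
  qed
qed

end
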